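(* Under the standing setup (in either Scenario I or Scenario II), assume $0<h<\frac{1}{d_{\max}}$ and that the expected graph is strongly connected. Then the system $x(t_{k+1})=(I-hL_{\sigma_k})^{\bar k}x(t_k)$ reaches consensus in probability: for every $x(0)\in\mathbb{R}^n$ and every $\varepsilon>0$, $\lim_{k\to\infty}P\{M(t_k)-m(t_k)\ge\varepsilon\}=0$, where $M(t_k)=\max_i x_i(t_k)$ and $m(t_k)=\min_i x_i(t_k)$. The same conclusion holds for the limiting system $x(t_{k+1})=e^{-L_{\sigma_k}\Delta}x(t_k)$.
   Context: Standing setup. $n\ge3$ agents. $G$ is an undirected connected graph on $\{1,\dots,n\}$ with symmetric $0/1$ adjacency matrix $A=[a_{ij}]$ (zero diagonal), degrees $d_i=\sum_j a_{ij}$, $d_{\max}=\max_i d_i$, and Laplacian $L=\mathrm{diag}(d_1,\dots,d_n)-A$, with entries $l_{ij}$. For a (possibly directed) $0/1$ adjacency matrix $B$ ($b_{ij}=1$ meaning agent $i$ receives from agent $j$), its Laplacian is $\mathrm{diag}(B\mathbf{1})-B$. Scenario I (agents 1,2 may fail to receive): $A_1$ is $A$ with row 1 set to zero, $A_2$ is $A$ with row 2 set to zero, $A_3$ is $A$ with rows 1 and 2 set to zero, $A_4=A$. Scenario II (agents 1,2 may fail to send): same with columns instead of rows. $L_i$ is the Laplacian of $A_i$ (so $L_4=L$). Probabilities $p_1=\alpha,p_2=\beta,p_3=\gamma,p_4=\theta\in(0,1)$ with $\alpha+\beta+\gamma+\theta=1$. The expected graph is the directed graph with weighted adjacency matrix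 $\sum_{i=1}^4 p_iA_i$. Sampling period $h>0$, integer $\bar k\ge1$, $\Delta=\bar k h$, $t_k=k\Delta$. $\sigma_0,\sigma_1,\dots$ are i.i.d. random variables in $\{1,2,3,4\}$ with $P(\sigma_k=i)=p_i$ (the graph is held fixed on each interval of length $\Delta$, during which the delta-operator system $\delta x=-L_{\sigma_k}x$ with step $h$ is run $\bar k$ times). The initial state $x(t_0)=x(0)\in\mathbb{R}^n$ is deterministic. $\mathbf{1}$ is the all-ones column vector. *)

theory Defs
  imports "HOL-Probability.Probability"
begin

(* Agents are indexed by a finite type 'n (n = CARD('n)); vectors are real^'n,
   matrices real^'n^'n. *)

primrec mpow :: "real^'n^'n \<Rightarrow> nat \<Rightarrow> real^'n^'n" where
  "mpow A 0 = mat 1"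
| "mpow A (Suc m) = A ** mpow A m"

definition mexp :: "real^'n^'n \<Rightarrow> real^'n^'n" where
  "mexp A = (\<chi> i j. \<Sum>m. (mpow A m) $ i $ j / fact m)"

definition lap :: "real^'n^'n \<Rightarrow> real^'n^'n" where
  "lap B = (\<chi> i j. (if i = j then (\<Sum>k\<in>UNIV. B $ i $ k) else 0) - B $ i $ j)"

definition degree :: "real^'n^'n \<Rightarrow> 'n \<Rightarrow> real" where
  "degree A i = (\<Sum>j\<in>UNIV. A $ i $ j)"

definition dmax :: "real^'n^'n \<Rightarrow> real" where
  "dmax A = Max (range (degree A))"

definition simple_graph_adj :: "real^'n^'n \<Rightarrow> bool" where
  "simple_graph_adj A \<longleftrightarrow> (\<forall>i j. A $ i $ j = 0 \<or> A $ i $ j = 1) \<and>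
     (\<forall>i j. A $ i $ j = A $ j $ i) \<and> (\<forall>i. A $ i $ i = 0)"

(* W $ i $ j > 0 means i receives from j, i.e. a directed edge j -> i;
   strong connectivity does not depend on this orientation convention. *)
definition strongly_connected :: "real^'n^'n \<Rightarrow> bool" where
  "strongly_connected W \<longleftrightarrow> (\<forall>i j. (\<lambda>a b. W $ b $ a > 0)\<^sup>*\<^sup>* i j)"

definition connected_graph :: "real^'n^'n \<Rightarrow> bool" where
  "connected_graph A \<longleftrightarrow> strongly_connected A"

datatype scenario = ScenarioI | ScenarioII

definition zero_lines :: "scenario \<Rightarrow> 'n set \<Rightarrow> real^'n^'n \<Rightarrow> real^'n^'n" where
  "zero_lines sc S A = (\<chi> i j. if (sc = ScenarioI \<and> i \<in> S) \<or> (sc = ScenarioII \<and> j \<in> S)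
                                then 0 else A $ i $ j)"

(* the four topologies A_1..A_4; a1, a2 are the two distinguished agents "1" and "2" *)
definition topo :: "scenario \<Rightarrow> 'n \<Rightarrow> 'n \<Rightarrow> real^'n^'n \<Rightarrow> nat \<Rightarrow> real^'n^'n" where
  "topo sc a1 a2 A i =
     (if i = 1 then zero_lines sc {a1} A
      else if i = 2 then zero_lines sc {a2} A
      else if i = 3 then zero_lines sc {a1, a2} A
      else A)"

definition expected_graph :: "scenario \<Rightarrow> 'n \<Rightarrow> 'n \<Rightarrow> real^'n^'n \<Rightarrow> (nat \<Rightarrow> real) \<Rightarrow> real^'n^'n" where
  "expected_graph sc a1 a2 A p = (\<Sum>i\<in>{1..4}. p i *\<^sub>R topo sc a1 a2 A i)"

primrec traj :: "(nat \<Rightarrow> real^'n^'n) \<Rightarrow> real^'n \<Rightarrow> (nat \<Rightarrow> nat) \<Rightarrow> nat \<Rightarrow> real^'n" where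
  "traj F x0 s 0 = x0"
| "traj F x0 s (Suc k) = F (s k) *v traj F x0 s k"

definition spread :: "real^'n \<Rightarrow> real" where
  "spread x = Max (range (\<lambda>i. x $ i)) - Min (range (\<lambda>i. x $ i))"

end

theory Submission
  imports Defs
begin


definition stoch :: "real^'n^'n \<Rightarrow> bool" where
  "stoch P \<longleftrightarrow> (\<forall>i j. 0 \<le> P$i$j) \<and> (\<forall>i. (\<Sum>j\<in>UNIV. P$i$j) = 1)"

lemma mpow_add: "mpow A (m+k) = mpow A m ** mpow A k"
  by (induction m) (auto simp: matrix_mul_assoc matrix_mul_lid)

lemma mpow_mult: "mpow (mpow A k) m = mpow A (k*m)"
  by (induction m) (auto simp: mpow_add[symmetric])

lemma mpow_Suc': "mpow A (Suc m) = mpow A m ** A"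
proof -
  have "mpow A (m + 1) = mpow A m ** mpow A 1" by (rule mpow_add)
  then show ?thesis by (simp add: matrix_mul_rid)
qed

lemma rowsum_mult:
  fixes X Y :: "real^'n^'n"
  assumes "\<forall>i. (\<Sum>j\<in>UNIV. X$i$j) = r" "\<forall>i. (\<Sum>j\<in>UNIV. Y$i$j) = s"
  shows "(\<Sum>j\<in>UNIV. (X ** Y)$i$j) = r * s"
proof -
  have "(\<Sum>j\<in>UNIV. (X ** Y)$i$j) = (\<Sum>j\<in>UNIV. \<Sum>k\<in>UNIV. X$i$k * Y$k$j)"
    by (simp add: matrix_matrix_mult_def)
  also have "\<dots> = (\<Sum>k\<in>UNIV. X$i$k * (\<Sum>j\<in>UNIV. Y$k$j))"
    by (subst sum.swap) (simp add: sum_distrib_left)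
  also have "\<dots> = (\<Sum>k\<in>UNIV. X$i$k) * s" using assms(2) by (simp add: sum_distrib_right)
  finally show ?thesis using assms(1) by simp
qed

lemma rowsum_mpow:
  fixes X :: "real^'n^'n"
  assumes "\<forall>i. (\<Sum>j\<in>UNIV. X$i$j) = r"
  shows "(\<Sum>j\<in>UNIV. mpow X m$i$j) = r ^ m"
proof (induction m arbitrary: i)
  case 0
  have "(\<Sum>j\<in>UNIV. (mat 1 :: real^'n^'n)$i$j) = (\<Sum>j\<in>UNIV. if j = i then 1 else 0)"
    by (intro sum.cong) (auto simp: mat_def)
  then show ?case by simp
next
  case (Suc m)
  then show ?case using rowsum_mult[OF assms, of "mpow X m" "r^m"] by simp
qed

lemma nonneg_mult:
  fixes X Y :: "real^'n^'n"
  assumes "\<forall>i j. 0 \<le> X$i$j" "\<forall>i j. 0 \<le> Y$i$j"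
  shows "0 \<le> (X ** Y)$i$j"
  apply (simp add: matrix_matrix_mult_def)
  apply (rule sum_nonneg)
  using assms by simp

lemma nonneg_mpow:
  fixes X :: "real^'n^'n"
  assumes "\<forall>i j. 0 \<le> X$i$j"
  shows "0 \<le> mpow X m$i$j"
proof (induction m arbitrary: i j)
  case 0 then show ?case by (simp add: mat_def)
next
  case (Suc m) then show ?case using nonneg_mult[OF assms, of "mpow X m"] by simp
qed

lemma stoch_mpow: "stoch P \<Longrightarrow> stoch (mpow P m)"
  unfolding stoch_def using nonneg_mpow rowsum_mpow[of P 1] by auto

definition vmax :: "real^'n \<Rightarrow> real" where "vmax x = Max (range (\<lambda>i. x$i))"
definition vmin :: "real^'n \<Rightarrow> real" where "vmin x = Min (range (\<lambda>i. x$i))"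

lemma spread_vm: "spread x = vmax x - vmin x" by (simp add: spread_def vmax_def vmin_def)
lemma vmax_ge: "x$i \<le> vmax x" by (simp add: vmax_def)
lemma vmin_le: "vmin x \<le> x$i" by (simp add: vmin_def)
lemma vmax_ex: "\<exists>i. vmax x = x$i"
proof -
  have "vmax x \<in> range (\<lambda>i. x$i)" unfolding vmax_def by (rule Max_in) auto
  then show ?thesis by auto
qed
lemma vmin_ex: "\<exists>i. vmin x = x$i"
proof -
  have "vmin x \<in> range (\<lambda>i. x$i)" unfolding vmin_def by (rule Min_in) auto
  then show ?thesis by auto
qed
lemma vmax_le: "(\<And>i. x$i \<le> c) \<Longrightarrow> vmax x \<le> c" using vmax_ex by metis
lemma vmin_ge: "(\<And>i. c \<le> x$i) \<Longrightarrow> c \<le> vmin x" using vmin_ex by metis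
lemma spread_nonneg: "0 \<le> spread x"
  using vmax_ge[of x] vmin_le[of x] by (simp add: spread_vm) (meson order.trans)

lemma stoch_upper:
  assumes "stoch P" shows "(P *v x)$i \<le> vmax x"
proof -
  have "(P *v x)$i = (\<Sum>j\<in>UNIV. P$i$j * x$j)" by (simp add: matrix_vector_mult_def)
  also have "\<dots> \<le> (\<Sum>j\<in>UNIV. P$i$j * vmax x)"
    using assms by (intro sum_mono mult_left_mono) (auto simp: stoch_def vmax_ge)
  also have "\<dots> = vmax x" using assms by (simp add: stoch_def sum_distrib_right[symmetric])
  finally show ?thesis .
qed

lemma stoch_lower:
  assumes "stoch P" shows "vmin x \<le> (P *v x)$i"
proof -
  have "(\<Sum>j\<in>UNIV. P$i$j * vmin x) \<le> (\<Sum>j\<in>UNIV. P$i$j * x$j)"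
    using assms by (intro sum_mono mult_left_mono) (auto simp: stoch_def vmin_le)
  also have "\<dots> = (P *v x)$i" by (simp add: matrix_vector_mult_def)
  also have "(\<Sum>j\<in>UNIV. P$i$j * vmin x) = vmin x" using assms by (simp add: stoch_def sum_distrib_right[symmetric])
  finally show ?thesis by simp
qed

lemma spread_stoch: "stoch P \<Longrightarrow> spread (P *v x) \<le> spread x"
proof -
  assume a: "stoch P"
  have "vmax (P *v x) \<le> vmax x" by (rule vmax_le[OF stoch_upper[OF a]])
  moreover have "vmin x \<le> vmin (P *v x)" by (rule vmin_ge[OF stoch_lower[OF a]])
  ultimately show ?thesis unfolding spread_vm by simp
qed

lemma contr_upper:
  assumes "stoch P" "\<forall>i j. \<eta> \<le> P$i$j"
  shows "(P *v x)$i \<le> vmax x - \<eta> * (vmax x - vmin x)"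
proof -
  obtain k where k: "vmin x = x$k" using vmin_ex by blast
  have e1: "(P *v x)$i = (\<Sum>j\<in>UNIV. P$i$j * vmax x) - (\<Sum>j\<in>UNIV. P$i$j * (vmax x - x$j))"
    by (simp add: matrix_vector_mult_def sum_subtractf[symmetric] algebra_simps)
  have e2: "(\<Sum>j\<in>UNIV. P$i$j * vmax x) = vmax x" using assms by (simp add: stoch_def sum_distrib_right[symmetric])
  have e3: "(\<Sum>j\<in>UNIV. P$i$j * (vmax x - x$j)) \<ge> P$i$k * (vmax x - x$k)"
    using assms(1) by (intro member_le_sum) (auto simp: stoch_def vmax_ge)
  have e4: "P$i$k * (vmax x - x$k) \<ge> \<eta> * (vmax x - vmin x)"
    using assms k vmax_ge[of x k] by (simp add: mult_right_mono)
  show ?thesis using e1 e2 e3 e4 by linarith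
qed

lemma contr_lower:
  assumes "stoch P" "\<forall>i j. \<eta> \<le> P$i$j"
  shows "vmin x + \<eta> * (vmax x - vmin x) \<le> (P *v x)$i"
proof -
  obtain k where k: "vmax x = x$k" using vmax_ex by blast
  have e1: "(P *v x)$i = (\<Sum>j\<in>UNIV. P$i$j * vmin x) + (\<Sum>j\<in>UNIV. P$i$j * (x$j - vmin x))"
    by (simp add: matrix_vector_mult_def sum.distrib[symmetric] algebra_simps)
  have e2: "(\<Sum>j\<in>UNIV. P$i$j * vmin x) = vmin x" using assms by (simp add: stoch_def sum_distrib_right[symmetric])
  have e3: "(\<Sum>j\<in>UNIV. P$i$j * (x$j - vmin x)) \<ge> P$i$k * (x$k - vmin x)"
    using assms(1) by (intro member_le_sum) (auto simp: stoch_def vmin_le)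
  have e4: "P$i$k * (x$k - vmin x) \<ge> \<eta> * (vmax x - vmin x)"
    using assms k vmin_le[of x k] by (simp add: mult_right_mono)
  show ?thesis using e1 e2 e3 e4 by linarith
qed

lemma spread_contr:
  assumes "stoch P" "\<forall>i j. \<eta> \<le> P$i$j"
  shows "spread (P *v x) \<le> (1 - 2*\<eta>) * spread x"
proof -
  have "vmax (P *v x) \<le> vmax x - \<eta> * (vmax x - vmin x)" by (rule vmax_le[OF contr_upper[OF assms]])
  moreover have "vmin x + \<eta> * (vmax x - vmin x) \<le> vmin (P *v x)" by (rule vmin_ge[OF contr_lower[OF assms]])
  ultimately show ?thesis unfolding spread_vm by (simp add: algebra_simps)
qed

lemma mult_entry_ge:
  fixes Y P :: "real^'n^'n"
  assumes "\<forall>i j. 0 \<le> Y$i$j" "\<forall>i j. 0 \<le> P$i$j"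
  shows "Y$b$a * P$a$j \<le> (Y ** P)$b$j"
proof -
  have "Y$b$a * P$a$j \<le> (\<Sum>k\<in>UNIV. Y$b$k * P$k$j)"
    using assms by (intro member_le_sum[where f="\<lambda>k. Y$b$k * P$k$j"]) auto
  then show ?thesis by (simp add: matrix_matrix_mult_def)
qed

lemma pos_mono:
  fixes Y :: "real^'n^'n"
  assumes nn: "\<forall>i j. 0 \<le> Y$i$j" and dg: "\<forall>i. 0 < Y$i$i"
    and p: "0 < mpow Y N $ i $ j" and le: "N \<le> N'"
  shows "0 < mpow Y N' $ i $ j"
  using le
proof (induction N' rule: dec_induct)
  case base then show ?case using p .
next
  case (step m)
  have "Y$i$i * mpow Y m$i$j \<le> (Y ** mpow Y m)$i$j"
    using nn nonneg_mpow[OF nn] by (intro mult_entry_ge) auto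
  moreover have "0 < Y$i$i * mpow Y m$i$j" using dg step by simp
  ultimately show ?case by simp
qed

lemma pos_reach:
  fixes Y A :: "real^'n^'n"
  assumes nn: "\<forall>i j. 0 \<le> Y$i$j" and dg: "\<forall>i. 0 < Y$i$i"
    and ed: "\<forall>a b. 0 < A$b$a \<longrightarrow> 0 < Y$b$a"
    and cn: "\<forall>i j. (\<lambda>a b. A$b$a > 0)\<^sup>*\<^sup>* i j"
  shows "\<exists>N0. \<forall>N\<ge>N0. \<forall>i j. 0 < mpow Y N $ i $ j"
proof -
  have reach: "\<exists>N. 0 < mpow Y N $ x $ j" if "(\<lambda>a b. A$b$a > 0)\<^sup>*\<^sup>* j x" for j x
    using that
  proof (induction rule: rtranclp_induct)
    case base then show ?case by (intro exI[of _ 0]) (simp add: mat_def)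
  next
    case (step a b)
    then obtain N where N: "0 < mpow Y N $ a $ j" by blast
    have "Y$b$a * mpow Y N$a$j \<le> (Y ** mpow Y N)$b$j"
      using nn nonneg_mpow[OF nn] by (intro mult_entry_ge) auto
    moreover have "0 < Y$b$a * mpow Y N$a$j" using ed step N by simp
    ultimately have "0 < mpow Y (Suc N) $ b $ j" by simp
    then show ?case by blast
  qed
  define Nf where "Nf = (\<lambda>(i,j). SOME N. 0 < mpow Y N $ i $ j)"
  have Nf: "0 < mpow Y (Nf (i,j)) $ i $ j" for i j
    unfolding Nf_def using reach[OF cn[rule_format, of j i]] by (simp, rule someI_ex)
  define N0 where "N0 = Max (range Nf)"
  have "Nf (i,j) \<le> N0" for i j unfolding N0_def by (rule Max_ge) auto
  then show ?thesis using pos_mono[OF nn dg Nf] by (intro exI[of _ N0]) (meson order.trans)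
qed




lemma traj_block:
  assumes "\<forall>t<T. s (a+t) = c"
  shows "traj F x0 s (a+T) = mpow (F c) T *v traj F x0 s a"
  using assms
proof (induction T)
  case 0 then show ?case by (simp add: matrix_vector_mul_lid)
next
  case (Suc T)
  then have "traj F x0 s (a+T) = mpow (F c) T *v traj F x0 s a" by simp
  moreover have "s (a+T) = c" using Suc.prems by simp
  ultimately show ?case by (simp add: matrix_vector_mul_assoc)
qed

lemma traj_mono:
  assumes "\<forall>i. stoch (F i)" "a \<le> b"
  shows "spread (traj F x0 s b) \<le> spread (traj F x0 s a)"
  using assms(2)
proof (induction b rule: dec_induct)
  case base then show ?case by simp
next
  case (step m)
  then show ?case using spread_stoch[OF assms(1)[rule_format], of "s m" "traj F x0 s m"] by simp
qed

lemma iter_contr: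
  assumes st: "stoch P" and eta: "\<forall>i j. \<eta> \<le> mpow P N $ i $ j"
  shows "spread (mpow P (N*m) *v x) \<le> (max (1 - 2*\<eta>) 0)^m * spread x"
proof (induction m)
  case 0 then show ?case by (simp add: matrix_vector_mul_lid)
next
  case (Suc m)
  let ?r = "max (1 - 2*\<eta>) 0"
  have "mpow P (N * Suc m) = mpow P N ** mpow P (N*m)" by (simp add: mpow_add[symmetric])
  then have "spread (mpow P (N * Suc m) *v x) = spread (mpow P N *v (mpow P (N*m) *v x))"
    by (simp add: matrix_vector_mul_assoc)
  also have "\<dots> \<le> (1 - 2*\<eta>) * spread (mpow P (N*m) *v x)"
    by (rule spread_contr[OF stoch_mpow[OF st] eta])
  also have "\<dots> \<le> ?r * spread (mpow P (N*m) *v x)"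
    by (intro mult_right_mono) (auto simp: spread_nonneg)
  also have "\<dots> \<le> ?r * (?r^m * spread x)"
    by (intro mult_left_mono Suc.IH) auto
  finally show ?case by simp
qed




lemma div_filterlim: "0 < (T::nat) \<Longrightarrow> filterlim (\<lambda>k. k div T) sequentially sequentially"
  unfolding filterlim_at_top eventually_sequentially
proof (intro allI exI[of _ "_ * T"] impI allI)
  fix Z k assume "0 < T" "Z * T \<le> k"
  from \<open>Z*T \<le> k\<close> have "(Z*T) div T \<le> k div T" by (rule div_le_mono)
  then show "Z \<le> k div T" using \<open>0 < T\<close> by simp
qed

lemma block_prob:
  fixes M :: "'w measure" and \<sigma> :: "nat \<Rightarrow> 'w \<Rightarrow> nat"
  assumes ps: "prob_space M"
    and ind: "prob_space.indep_vars M (\<lambda>_. count_space UNIV) \<sigma> UNIV"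
    and q: "\<forall>k. measure M {\<omega> \<in> space M. \<sigma> k \<omega> = c} = q"
    and T: "0 < T" and J: "0 < J"
  shows "(\<Inter>j\<in>{..<J}. space M - {\<omega> \<in> space M. \<forall>t<T. \<sigma> (j*T+t) \<omega> = c}) \<in> sets M"
    and "measure M (\<Inter>j\<in>{..<J}. space M - {\<omega> \<in> space M. \<forall>t<T. \<sigma> (j*T+t) \<omega> = c})
         = (1 - q^T)^J"
proof -
  interpret prob_space M by (rule ps)
  define I where "I = (\<lambda>j::nat. {j*T..<j*T+T})"
  define E where "E = (\<lambda>t. {\<sigma> t -` A \<inter> space M | A. A \<in> sets (count_space (UNIV::nat set))})"
  define G where "G = (\<lambda>j. {\<omega> \<in> space M. \<forall>t<T. \<sigma> (j*T+t) \<omega> = c})"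
  have Geq: "G j = (\<Inter>t\<in>I j. \<sigma> t -` {c} \<inter> space M)" for j
  proof (rule set_eqI)
    fix \<omega>
    have ne: "j*T \<in> I j" using T by (simp add: I_def)
    show "\<omega> \<in> G j \<longleftrightarrow> \<omega> \<in> (\<Inter>t\<in>I j. \<sigma> t -` {c} \<inter> space M)"
    proof
      assume a: "\<omega> \<in> G j"
      show "\<omega> \<in> (\<Inter>t\<in>I j. \<sigma> t -` {c} \<inter> space M)"
      proof (rule INT_I)
        fix t assume "t \<in> I j"
        then have t1: "j*T \<le> t" "t < j*T + T" by (auto simp: I_def)
        then obtain d where d0: "t = j*T + d" using le_iff_add by blast
        then have d: "t = j*T + d" "d < T" using t1 by auto
        have "\<sigma> (j*T + d) \<omega> = c" "\<omega> \<in> space M" using a d(2) by (auto simp: G_def)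
        then show "\<omega> \<in> \<sigma> t -` {c} \<inter> space M" using d(1) by simp
      qed
    next
      assume a: "\<omega> \<in> (\<Inter>t\<in>I j. \<sigma> t -` {c} \<inter> space M)"
      then have "\<omega> \<in> space M" using ne by blast
      moreover have "\<sigma> (j*T+t) \<omega> = c" if "t < T" for t
      proof -
        have "j*T+t \<in> I j" using that by (simp add: I_def)
        then show ?thesis using a by blast
      qed
      ultimately show "\<omega> \<in> G j" by (simp add: G_def)
    qed
  qed
  have rv: "random_variable (count_space UNIV) (\<sigma> t)" for t
    using ind unfolding indep_vars_def by simp
  have isE: "indep_sets E UNIV"
  proof -
    have "indep_sets (\<lambda>i. sigma_sets (space M) (E i)) UNIV"
      using ind unfolding indep_vars_def E_def by (rule conjunct2)
    then show ?thesis
      by (rule indep_sets_mono_sets) (rule subsetI, rule sigma_sets.Basic)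
  qed
  have "indep_sets (\<lambda>j. sigma_sets (space M) (\<Union>i\<in>I j. E i)) UNIV"
  proof (rule indep_sets_collect_sigma)
    show "indep_sets E (\<Union>j\<in>UNIV. I j)" by (rule indep_sets_mono_index[OF _ isE]) simp
    show "Int_stable (E i)" for i
      unfolding Int_stable_def
    proof (intro ballI)
      fix a b assume "a \<in> E i" "b \<in> E i"
      then obtain A B where "a = \<sigma> i -` A \<inter> space M" "b = \<sigma> i -` B \<inter> space M"
        unfolding E_def by auto
      then have "a \<inter> b = \<sigma> i -` (A \<inter> B) \<inter> space M" by auto
      then show "a \<inter> b \<in> E i" unfolding E_def by (intro CollectI exI[of _ "A \<inter> B"]) simp
    qed
    show "disjoint_family_on I UNIV"
      unfolding disjoint_family_on_def I_def
    proof (intro ballI impI)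
      fix m n :: nat assume "m \<noteq> n"
      then have "m < n \<or> n < m" by auto
      then show "{m*T..<m*T+T} \<inter> {n*T..<n*T+T} = {}"
      proof
        assume "m < n" then have "m*T + T \<le> n*T" using mult_le_mono1[of "Suc m" n T] by simp
        then show ?thesis by (simp add: disjoint_iff)
      next
        assume "n < m" then have "n*T + T \<le> m*T" using mult_le_mono1[of "Suc n" m T] by simp
        then show ?thesis by (simp add: disjoint_iff)
      qed
    qed
  qed
  note isJ = this
  have Esub: "(\<Union>i\<in>I j. E i) \<subseteq> Pow (space M)" for j unfolding E_def by auto
  have Gs: "G j \<in> sigma_sets (space M) (\<Union>i\<in>I j. E i)" for j
  proof -
    interpret S: sigma_algebra "space M" "sigma_sets (space M) (\<Union>i\<in>I j. E i)"
      by (rule sigma_algebra_sigma_sets[OF Esub])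
    have "G j = (\<Inter>t\<in>I j. \<sigma> t -` {c} \<inter> space M)" by (rule Geq)
    also have "\<dots> \<in> sigma_sets (space M) (\<Union>i\<in>I j. E i)"
    proof (rule S.finite_INT)
      show "finite (I j)" "I j \<noteq> {}" using T by (auto simp: I_def)
      fix t assume t: "t \<in> I j"
      have "\<sigma> t -` {c} \<inter> space M \<in> E t" unfolding E_def by (intro CollectI exI[of _ "{c}"]) simp
      then have "\<sigma> t -` {c} \<inter> space M \<in> (\<Union>i\<in>I j. E i)" using t by blast
      then show "\<sigma> t -` {c} \<inter> space M \<in> sigma_sets (space M) (\<Union>i\<in>I j. E i)"
        by (rule sigma_sets.Basic)
    qed
    finally show ?thesis .
  qed
  have Ds: "space M - G j \<in> sigma_sets (space M) (\<Union>i\<in>I j. E i)" for j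
    using Gs by (rule sigma_sets.Compl)
  have sub: "sigma_sets (space M) (\<Union>i\<in>I j. E i) \<subseteq> events" for j
  proof (rule sets.sigma_sets_subset, rule subsetI)
    fix x assume "x \<in> (\<Union>i\<in>I j. E i)"
    then obtain t where "x \<in> E t" by blast
    then obtain A where "x = \<sigma> t -` A \<inter> space M" unfolding E_def by auto
    moreover have "\<sigma> t -` A \<inter> space M \<in> events" using measurable_sets[OF rv, of A t] by simp
    ultimately show "x \<in> events" by simp
  qed
  have pG: "prob (G j) = q^T" for j
  proof -
    have "G j = (\<Inter>t\<in>I j. \<sigma> t -` {c} \<inter> space M)" by (rule Geq)
    moreover have "prob (\<Inter>t\<in>I j. \<sigma> t -` {c} \<inter> space M) = (\<Prod>t\<in>I j. prob (\<sigma> t -` {c} \<inter> space M))"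
      by (rule indep_varsD[OF ind]) (use T in \<open>auto simp: I_def\<close>)
    ultimately have "prob (G j) = (\<Prod>t\<in>I j. prob (\<sigma> t -` {c} \<inter> space M))" by simp
    also have "\<dots> = (\<Prod>t\<in>I j. q)"
    proof (intro prod.cong refl)
      fix t
      have "\<sigma> t -` {c} \<inter> space M = {\<omega> \<in> space M. \<sigma> t \<omega> = c}" by auto
      then show "prob (\<sigma> t -` {c} \<inter> space M) = q" using q by simp
    qed
    finally show ?thesis by (simp add: I_def)
  qed
  have "(\<Inter>j\<in>{..<J}. space M - G j) \<in> events"
  proof (rule sets.finite_INT)
    show "finite {..<J}" "{..<J} \<noteq> {}" using J by auto
    fix j show "space M - G j \<in> events" using Ds[of j] sub[of j] by blast
  qed
  then show "(\<Inter>j\<in>{..<J}. space M - {\<omega> \<in> space M. \<forall>t<T. \<sigma> (j*T+t) \<omega> = c}) \<in> sets M"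
    by (simp add: G_def)
  have "prob (\<Inter>j\<in>{..<J}. space M - G j) = (\<Prod>j\<in>{..<J}. prob (space M - G j))"
    using J by (intro indep_setsD[OF isJ]) (auto intro: Ds)
  also have "\<dots> = (\<Prod>j\<in>{..<J}. 1 - q^T)"
  proof (intro prod.cong refl)
    fix j
    have "G j \<in> events" using Gs[of j] sub[of j] by blast
    then show "prob (space M - G j) = 1 - q^T" using pG[of j] by (simp add: prob_compl)
  qed
  finally show "measure M (\<Inter>j\<in>{..<J}. space M - {\<omega> \<in> space M. \<forall>t<T. \<sigma> (j*T+t) \<omega> = c})
         = (1 - q^T)^J" by (simp add: G_def)
qed

lemma consensus_abstract:
  fixes M :: "'w measure" and \<sigma> :: "nat \<Rightarrow> 'w \<Rightarrow> nat" and F :: "nat \<Rightarrow> real^'n^'n"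
  assumes ps: "prob_space M"
    and ind: "prob_space.indep_vars M (\<lambda>_. count_space UNIV) \<sigma> UNIV"
    and q: "\<forall>k. measure M {\<omega> \<in> space M. \<sigma> k \<omega> = c} = q" and q0: "0 < q"
    and st: "\<forall>i. stoch (F i)" and pos: "\<forall>i j. 0 < mpow (F c) N $ i $ j" and N: "0 < N"
  shows "\<forall>x0. \<forall>\<epsilon>>0. (\<lambda>k. measure M {\<omega> \<in> space M. spread (traj F x0 (\<lambda>j. \<sigma> j \<omega>) k) \<ge> \<epsilon>}) \<longlonglongrightarrow> 0"
proof (intro allI impI)
  interpret prob_space M by (rule ps)
  fix x0 :: "real^'n" and \<epsilon> :: real assume eps: "0 < \<epsilon>"
  define P where "P = mpow (F c) N"
  define \<eta> where "\<eta> = Min (range (\<lambda>(i,j). P $ i $ j))"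
  have eta_le: "\<forall>i j. \<eta> \<le> P $ i $ j"
  proof (intro allI)
    fix i j
    have "P $ i $ j \<in> range (\<lambda>(i,j). P $ i $ j)" by (rule range_eqI[of _ _ "(i,j)"]) simp
    then show "\<eta> \<le> P $ i $ j" unfolding \<eta>_def by (intro Min_le) auto
  qed
  have "\<eta> \<in> range (\<lambda>(i,j). P $ i $ j)" unfolding \<eta>_def by (rule Min_in) auto
  then have eta0: "0 < \<eta>" using pos unfolding P_def by auto
  define \<rho> where "\<rho> = max (1 - 2*\<eta>) 0"
  have rho: "0 \<le> \<rho>" "\<rho> < 1" using eta0 unfolding \<rho>_def by auto
  define s0 where "s0 = spread x0"
  have "(\<lambda>m. \<rho>^m * s0) \<longlonglongrightarrow> 0"
    by (intro tendsto_mult_left_zero LIMSEQ_power_zero) (use rho in simp)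
  then have "eventually (\<lambda>m. \<rho>^m * s0 < \<epsilon>) sequentially"
    using eps by (rule order_tendstoD(2))
  then obtain m0 where m0: "\<forall>m\<ge>m0. \<rho>^m * s0 < \<epsilon>" unfolding eventually_sequentially by blast
  define m where "m = Suc m0"
  define T where "T = N * m"
  have T0: "0 < T" using N by (simp add: T_def m_def)
  have stc: "stoch (F c)" using st by blast
  have key: "spread (mpow (F c) T *v x) < \<epsilon>" if "spread x \<le> s0" for x
  proof -
    have "spread (mpow (F c) T *v x) \<le> \<rho>^m * spread x"
      unfolding T_def \<rho>_def by (rule iter_contr[OF stc eta_le[unfolded P_def]])
    also have "\<dots> \<le> \<rho>^m * s0" using that rho by (intro mult_left_mono) auto
    also have "\<dots> < \<epsilon>" using m0[rule_format, of m] by (simp add: m_def del: power_Suc)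
    finally show ?thesis .
  qed
  have q1: "q \<le> 1" using q prob_le_1 by metis
  define r where "r = 1 - q^T"
  have r: "0 \<le> r" "r < 1" using q0 q1 unfolding r_def by (auto simp: power_le_one)
  define E where "E = (\<lambda>k. {\<omega> \<in> space M. spread (traj F x0 (\<lambda>j. \<sigma> j \<omega>) k) \<ge> \<epsilon>})"
  have bound: "measure M (E k) \<le> r ^ (k div T)" for k
  proof (cases "k div T = 0")
    case True then show ?thesis by (simp add: E_def)
  next
    case False
    define J where "J = k div T"
    have J0: "0 < J" using False by (simp add: J_def)
    let ?B = "\<Inter>j\<in>{..<J}. space M - {\<omega> \<in> space M. \<forall>t<T. \<sigma> (j*T+t) \<omega> = c}"
    have Bs: "?B \<in> sets M" by (rule block_prob(1)[OF ps ind q T0 J0])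
    have Bm: "measure M ?B = r^J" unfolding r_def by (rule block_prob(2)[OF ps ind q T0 J0])
    have "E k \<subseteq> ?B"
    proof
      fix \<omega> assume w: "\<omega> \<in> E k"
      let ?s = "\<lambda>j. \<sigma> j \<omega>"
      show "\<omega> \<in> ?B"
      proof (rule INT_I)
        fix j assume j: "j \<in> {..<J}"
        show "\<omega> \<in> space M - {\<omega> \<in> space M. \<forall>t<T. \<sigma> (j*T+t) \<omega> = c}"
        proof (rule ccontr)
          assume "\<omega> \<notin> space M - {\<omega> \<in> space M. \<forall>t<T. \<sigma> (j*T+t) \<omega> = c}"
          then have good: "\<forall>t<T. ?s (j*T+t) = c" using w by (auto simp: E_def)
          have tb: "traj F x0 ?s (j*T+T) = mpow (F c) T *v traj F x0 ?s (j*T)"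
            by (rule traj_block[OF good])
          have "spread (traj F x0 ?s (j*T)) \<le> spread (traj F x0 ?s 0)"
            by (rule traj_mono[OF st]) simp
          then have "spread (traj F x0 ?s (j*T)) \<le> s0" by (simp add: s0_def)
          then have lt: "spread (traj F x0 ?s (j*T+T)) < \<epsilon>" using key tb by simp
          have "Suc j * T \<le> J * T" using j by (intro mult_le_mono1) simp
          also have "J * T \<le> k" unfolding J_def by (rule div_times_less_eq_dividend)
          finally have "j*T+T \<le> k" by simp
          then have "spread (traj F x0 ?s k) \<le> spread (traj F x0 ?s (j*T+T))"
            by (rule traj_mono[OF st])
          then show False using lt w by (auto simp: E_def)
        qed
      qed
    qed
    then have "measure M (E k) \<le> measure M ?B" using Bs by (rule finite_measure_mono)
    then show ?thesis using Bm by (simp add: J_def)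
  qed
  have lim: "(\<lambda>k. r ^ (k div T)) \<longlonglongrightarrow> 0"
    by (rule filterlim_compose[OF LIMSEQ_power_zero div_filterlim[OF T0]]) (use r in simp)
  show "(\<lambda>k. measure M (E k)) \<longlonglongrightarrow> 0"
    by (rule tendsto_sandwich[OF _ _ tendsto_const lim]) (auto simp: bound)
qed




lemma binom_step:
  fixes z :: "nat \<Rightarrow> real"
  shows "(\<Sum>k\<le>Suc m. real (Suc m choose k) * s^(Suc m - k) * z k)
       = (\<Sum>k\<le>m. real (m choose k) * s^(m-k) * z (Suc k)) + s * (\<Sum>k\<le>m. real (m choose k) * s^(m-k) * z k)"
proof -
  have L: "(\<Sum>k\<le>Suc m. real (Suc m choose k) * s^(Suc m - k) * z k)
     = s^Suc m * z 0 + (\<Sum>k\<le>m. real (m choose k) * s^(m-k) * z (Suc k))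
       + (\<Sum>k\<le>m. real (m choose Suc k) * s^(m-k) * z (Suc k))"
    by (subst sum.atMost_Suc_shift) (simp add: ring_distribs sum.distrib)
  have "s * (\<Sum>k\<le>m. real (m choose k) * s^(m-k) * z k) = (\<Sum>k\<le>m. real (m choose k) * s^(Suc m - k) * z k)"
    unfolding sum_distrib_left by (intro sum.cong refl) (simp add: Suc_diff_le)
  also have "\<dots> = (\<Sum>k\<le>Suc m. real (m choose k) * s^(Suc m - k) * z k)"
    by simp
  also have "\<dots> = s^Suc m * z 0 + (\<Sum>k\<le>m. real (m choose Suc k) * s^(m-k) * z (Suc k))"
    by (subst sum.atMost_Suc_shift) simp
  finally show ?thesis using L by simp
qed

lemma mat_shift_entry: "(Z + s *\<^sub>R mat 1) $ i $ l = Z $ i $ l + (if i = l then s else (0::real))"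
  by (simp add: mat_def)

lemma mpow_shift:
  fixes Z :: "real^'n^'n"
  shows "mpow (Z + s *\<^sub>R mat 1) m $ i $ j = (\<Sum>k\<le>m. real (m choose k) * s^(m-k) * mpow Z k $ i $ j)"
proof (induction m arbitrary: i j)
  case 0 then show ?case by simp
next
  case (Suc m)
  let ?Q = "mpow (Z + s *\<^sub>R mat 1) m"
  let ?c = "\<lambda>k. real (m choose k) * s^(m-k)"
  have "mpow (Z + s *\<^sub>R mat 1) (Suc m) $ i $ j = (\<Sum>l\<in>UNIV. (Z $ i $ l + (if i = l then s else 0)) * ?Q $ l $ j)"
    by (simp add: matrix_matrix_mult_def, intro sum.cong refl) (simp add: mat_def)
  also have "\<dots> = (\<Sum>l\<in>UNIV. Z $ i $ l * ?Q $ l $ j) + s * ?Q $ i $ j"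
  proof -
    have "(\<Sum>l\<in>UNIV. (if i = l then s else 0) * ?Q $ l $ j) = (\<Sum>l\<in>UNIV. if i = l then s * ?Q $ l $ j else 0)"
      by (intro sum.cong refl) simp
    also have "\<dots> = s * ?Q $ i $ j" by simp
    finally have d: "(\<Sum>l\<in>UNIV. (if i = l then s else 0) * ?Q $ l $ j) = s * ?Q $ i $ j" .
    show ?thesis unfolding distrib_right sum.distrib d ..
  qed
  also have "(\<Sum>l\<in>UNIV. Z $ i $ l * ?Q $ l $ j) = (\<Sum>k\<le>m. ?c k * mpow Z (Suc k) $ i $ j)"
  proof -
    have "(\<Sum>l\<in>UNIV. Z $ i $ l * ?Q $ l $ j) = (\<Sum>l\<in>UNIV. \<Sum>k\<le>m. Z $ i $ l * (?c k * mpow Z k $ l $ j))"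
      by (simp add: Suc.IH sum_distrib_left mult.assoc)
    also have "\<dots> = (\<Sum>k\<le>m. \<Sum>l\<in>UNIV. ?c k * (Z $ i $ l * mpow Z k $ l $ j))"
      by (subst sum.swap) (simp add: mult_ac)
    also have "\<dots> = (\<Sum>k\<le>m. ?c k * mpow Z (Suc k) $ i $ j)"
      by (simp add: matrix_matrix_mult_def sum_distrib_left)
    finally show ?thesis .
  qed
  also have "\<dots> + s * ?Q $ i $ j = (\<Sum>k\<le>Suc m. real (Suc m choose k) * s^(Suc m - k) * mpow Z k $ i $ j)"
    using binom_step[of m s "\<lambda>k. mpow Z k $ i $ j"] by (simp add: Suc.IH mult.assoc)
  finally show ?case .
qed

lemma mpow_bound:
  fixes Z :: "real^'n^'n"
  defines "R \<equiv> (\<Sum>i\<in>UNIV. \<Sum>k\<in>UNIV. \<bar>Z $ i $ k\<bar>)"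
  shows "\<bar>mpow Z m $ i $ j\<bar> \<le> R^m"
proof (induction m arbitrary: i j)
  case 0 then show ?case by (simp add: mat_def)
next
  case (Suc m)
  have R0: "0 \<le> R" unfolding R_def by (intro sum_nonneg) auto
  have row: "(\<Sum>k\<in>UNIV. \<bar>Z $ i $ k\<bar>) \<le> R"
    unfolding R_def by (rule member_le_sum[where f="\<lambda>i. \<Sum>k\<in>UNIV. \<bar>Z $ i $ k\<bar>"]) (auto intro: sum_nonneg)
  have "\<bar>mpow Z (Suc m) $ i $ j\<bar> = \<bar>\<Sum>k\<in>UNIV. Z $ i $ k * mpow Z m $ k $ j\<bar>"
    by (simp add: matrix_matrix_mult_def)
  also have "\<dots> \<le> (\<Sum>k\<in>UNIV. \<bar>Z $ i $ k\<bar> * \<bar>mpow Z m $ k $ j\<bar>)"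
    by (rule order_trans[OF sum_abs]) (simp add: abs_mult)
  also have "\<dots> \<le> (\<Sum>k\<in>UNIV. \<bar>Z $ i $ k\<bar> * R^m)"
    by (intro sum_mono mult_left_mono Suc.IH) auto
  also have "\<dots> = (\<Sum>k\<in>UNIV. \<bar>Z $ i $ k\<bar>) * R^m" by (simp add: sum_distrib_right)
  also have "\<dots> \<le> R * R^m" using row R0 by (intro mult_right_mono) auto
  finally show ?case by simp
qed

lemma mpow_summable:
  fixes Z :: "real^'n^'n"
  shows "summable (\<lambda>m. \<bar>mpow Z m $ i $ j / fact m\<bar>)"
proof -
  define R where "R = (\<Sum>i\<in>UNIV. \<Sum>k\<in>UNIV. \<bar>Z $ i $ k\<bar>)"
  show ?thesis
  proof (rule summable_comparison_test'[OF summable_exp[of R]])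
    fix m :: nat
    have "\<bar>mpow Z m $ i $ j\<bar> \<le> R^m" unfolding R_def by (rule mpow_bound)
    then show "norm \<bar>mpow Z m $ i $ j / fact m\<bar> \<le> inverse (fact m) * R^m"
      by (simp add: divide_simps abs_divide)
  qed
qed

lemma mexp_entry: "mexp Z $ i $ j = (\<Sum>m. mpow Z m $ i $ j / fact m)"
  by (simp add: mexp_def)

lemma mexp_shift:
  fixes Z :: "real^'n^'n"
  shows "mexp (Z + s *\<^sub>R mat 1) $ i $ j = exp s * mexp Z $ i $ j"
proof -
  define a where "a = (\<lambda>k. mpow Z k $ i $ j / fact k)"
  define b where "b = (\<lambda>l. s^l / fact l)"
  have sa: "summable (\<lambda>k. norm (a k))" unfolding a_def using mpow_summable by simp
  have sb: "summable (\<lambda>k. norm (b k))" unfolding b_def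
    using summable_exp[of "\<bar>s\<bar>"] by (simp add: abs_divide abs_mult power_abs divide_inverse mult.commute)
  have eb: "(\<Sum>l. b l) = exp s"
    using exp_converges[of s] unfolding b_def by (simp add: sums_iff divide_inverse mult.commute)
  have "mexp (Z + s *\<^sub>R mat 1) $ i $ j = (\<Sum>m. (\<Sum>k\<le>m. real (m choose k) * s^(m-k) * mpow Z k $ i $ j) / fact m)"
    by (simp add: mexp_entry mpow_shift)
  also have "\<dots> = (\<Sum>m. \<Sum>k\<le>m. a k * b (m - k))"
  proof (intro suminf_cong)
    fix m
    have "(\<Sum>k\<le>m. real (m choose k) * s^(m-k) * mpow Z k $ i $ j) / fact m
        = (\<Sum>k\<le>m. real (m choose k) * s^(m-k) * mpow Z k $ i $ j / fact m)"
      by (simp add: sum_divide_distrib)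
    also have "\<dots> = (\<Sum>k\<le>m. a k * b (m - k))"
    proof (intro sum.cong refl)
      fix k assume "k \<in> {..m}"
      then have km: "k \<le> m" by simp
      have "real (m choose k) = fact m / (fact k * fact (m - k))" using binomial_fact[OF km] by simp
      then show "real (m choose k) * s^(m-k) * mpow Z k $ i $ j / fact m = a k * b (m - k)"
        unfolding a_def b_def by (simp add: field_simps)
    qed
    finally show "(\<Sum>k\<le>m. real (m choose k) * s^(m-k) * mpow Z k $ i $ j) / fact m = (\<Sum>k\<le>m. a k * b (m - k))" .
  qed
  also have "\<dots> = (\<Sum>k. a k) * (\<Sum>l. b l)" by (rule Cauchy_product[OF sa sb, symmetric])
  also have "\<dots> = exp s * mexp Z $ i $ j" using eb by (simp add: a_def mexp_entry)
  finally show ?thesis .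
qed




lemma topo_entry: "topo sc a1 a2 A i $ x $ y = 0 \<or> topo sc a1 a2 A i $ x $ y = A $ x $ y"
  by (auto simp: topo_def zero_lines_def)

lemma topo4: "topo sc a1 a2 A 4 = A"
  by (simp add: topo_def)

lemma lap_entry: "lap T $ x $ y = (if x = y then (\<Sum>k\<in>UNIV. T $ x $ k) else 0) - T $ x $ y"
  by (simp add: lap_def)

lemma lap_rowsum: "(\<Sum>y\<in>UNIV. lap T $ x $ y) = 0"
  by (simp add: lap_entry sum_subtractf)

locale gstuff =
  fixes A T :: "real^'n^'n" and d :: real
  assumes nn: "\<forall>x y. 0 \<le> T $ x $ y" and dg0: "\<forall>x. T $ x $ x = 0"
    and deg: "\<forall>x. (\<Sum>k\<in>UNIV. T $ x $ k) \<le> d"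
begin

lemma B_stoch:
  assumes "0 \<le> h" "h * d \<le> 1"
  shows "stoch (mat 1 - h *\<^sub>R lap T)"
  unfolding stoch_def
proof (intro conjI allI)
  fix x y
  show "0 \<le> (mat 1 - h *\<^sub>R lap T) $ x $ y"
  proof (cases "x = y")
    case True
    have "h * (\<Sum>k\<in>UNIV. T $ x $ k) \<le> h * d" using assms deg by (intro mult_left_mono) auto
    then show ?thesis using True assms dg0 by (simp add: lap_entry mat_def)
  next
    case False then show ?thesis using assms nn by (simp add: lap_entry mat_def)
  qed
next
  fix x
  have "(\<Sum>y\<in>UNIV. (mat 1 - h *\<^sub>R lap T) $ x $ y) = (\<Sum>y\<in>UNIV. (if x = y then 1 else 0) - h * lap T $ x $ y)"
    by (intro sum.cong refl) (simp add: mat_def)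
  also have "\<dots> = 1 - h * (\<Sum>y\<in>UNIV. lap T $ x $ y)"
    by (simp add: sum_subtractf sum_distrib_left)
  finally show "(\<Sum>y\<in>UNIV. (mat 1 - h *\<^sub>R lap T) $ x $ y) = 1" by (simp add: lap_rowsum)
qed

lemma Y_nonneg:
  assumes "d \<le> c" shows "0 \<le> (c *\<^sub>R mat 1 - lap T) $ x $ y"
proof (cases "x = y")
  case True then show ?thesis using assms deg dg0 by (simp add: lap_entry mat_def) (smt (verit))
next
  case False then show ?thesis using nn by (simp add: lap_entry mat_def)
qed

lemma mexp_stoch:
  assumes "0 \<le> \<tau>" "d \<le> c"
  shows "stoch (mexp (- (\<tau> *\<^sub>R lap T)))"
  unfolding stoch_def
proof (intro conjI allI)
  fix x y
  define Z where "Z = \<tau> *\<^sub>R (c *\<^sub>R mat 1 - lap T)"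
  have eq: "- (\<tau> *\<^sub>R lap T) = Z + (- (\<tau> * c)) *\<^sub>R mat 1"
    unfolding Z_def by (simp add: vec_eq_iff algebra_simps)
  have Zn: "\<forall>i j. 0 \<le> Z $ i $ j" unfolding Z_def using Y_nonneg[OF assms(2)] assms(1) by simp
  have "summable (\<lambda>m. mpow Z m $ x $ y / fact m)"
    using mpow_summable[of Z x y] by (rule summable_rabs_cancel)
  then have "0 \<le> mexp Z $ x $ y" unfolding mexp_entry
    by (rule suminf_nonneg) (simp add: nonneg_mpow[OF Zn])
  then show "0 \<le> mexp (- (\<tau> *\<^sub>R lap T)) $ x $ y" unfolding eq mexp_shift by simp
next
  fix x
  let ?X = "- (\<tau> *\<^sub>R lap T)"
  have rs: "\<forall>i. (\<Sum>j\<in>UNIV. ?X $ i $ j) = 0"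
    using lap_rowsum[of T] by (simp add: sum_negf sum_distrib_left[symmetric])
  have sm: "summable (\<lambda>m. mpow ?X m $ x $ y / fact m)" for y
    using mpow_summable[of ?X x y] by (rule summable_rabs_cancel)
  have "(\<Sum>y\<in>UNIV. mexp ?X $ x $ y) = (\<Sum>y\<in>UNIV. \<Sum>m. mpow ?X m $ x $ y / fact m)"
    by (simp add: mexp_entry)
  also have "\<dots> = (\<Sum>m. \<Sum>y\<in>UNIV. mpow ?X m $ x $ y / fact m)"
    by (rule suminf_sum[symmetric]) (rule sm)
  also have "\<dots> = (\<Sum>m. (0::real)^m / fact m)"
    using rowsum_mpow[OF rs] by (simp add: sum_divide_distrib[symmetric])
  also have "\<dots> = 1"
    using exp_converges[of "0::real"] by (simp add: sums_iff divide_inverse mult.commute)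
  finally show "(\<Sum>y\<in>UNIV. mexp ?X $ x $ y) = 1" .
qed

end




theorem theorem2:
  fixes M :: "'w measure" and \<sigma> :: "nat \<Rightarrow> 'w \<Rightarrow> nat"
    and A :: "real^'n^'n" and a1 a2 :: 'n and sc :: scenario
    and p :: "nat \<Rightarrow> real" and h :: real and kbar :: nat
  assumes "CARD('n) \<ge> 3"
    and "simple_graph_adj A" and "connected_graph A"
    and "a1 \<noteq> a2"
    and "\<forall>i\<in>{1..4}. 0 < p i \<and> p i < 1" and "p 1 + p 2 + p 3 + p 4 = 1"
    and "prob_space M"
    and "prob_space.indep_vars M (\<lambda>_. count_space UNIV) \<sigma> UNIV"
    and "\<forall>k i. i \<in> {1..4} \<longrightarrow> measure M {\<omega> \<in> space M. \<sigma> k \<omega> = i} = p i"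
    and "0 < h" and "h < 1 / dmax A" and "kbar \<ge> 1"
    and "strongly_connected (expected_graph sc a1 a2 A p)"
  shows
    "(\<forall>x0 :: real^'n. \<forall>\<epsilon>>0.
       (\<lambda>k. measure M {\<omega> \<in> space M.
          spread (traj (\<lambda>i. mpow (mat 1 - h *\<^sub>R lap (topo sc a1 a2 A i)) kbar) x0
                       (\<lambda>j. \<sigma> j \<omega>) k) \<ge> \<epsilon>}) \<longlonglongrightarrow> 0)
     \<and> (\<forall>x0 :: real^'n. \<forall>\<epsilon>>0.
       (\<lambda>k. measure M {\<omega> \<in> space M.
          spread (traj (\<lambda>i. mexp (- ((real kbar * h) *\<^sub>R lap (topo sc a1 a2 A i)))) x0
                       (\<lambda>j. \<sigma> j \<omega>) k) \<ge> \<epsilon>}) \<longlonglongrightarrow> 0)"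
proof -
  note ps = assms(7) and ind = assms(8)
  have q: "\<forall>k. measure M {\<omega> \<in> space M. \<sigma> k \<omega> = 4} = p 4" using assms(9) by simp
  have q0: "0 < p 4" using assms(5) by simp
  have A01: "\<forall>x y. A $ x $ y = 0 \<or> A $ x $ y = 1" and Ad: "\<forall>x. A $ x $ x = 0"
    using assms(2) unfolding simple_graph_adj_def by auto
  have An: "0 \<le> A $ x $ y" for x y using A01 by (metis order.refl zero_le_one)
  have cn: "\<forall>i j. (\<lambda>a b. A$b$a > 0)\<^sup>*\<^sup>* i j"
    using assms(3) unfolding connected_graph_def strongly_connected_def .
  define d where "d = dmax A"
  have degle: "(\<Sum>k\<in>UNIV. A $ x $ k) \<le> d" for x
  proof -
    have "degree A x \<le> dmax A" unfolding dmax_def by (rule Max_ge) auto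
    then show ?thesis by (simp add: degree_def d_def)
  qed
  have d0: "0 < d"
  proof (rule ccontr)
    assume "\<not> 0 < d"
    then have "1 / dmax A \<le> 0" by (simp add: d_def divide_nonpos_nonneg)
    then show False using assms(10,11) by linarith
  qed
  have hd: "h * d < 1" using assms(10,11) d0 by (simp add: d_def field_simps)
  have gs: "gstuff (topo sc a1 a2 A i) d" for i
  proof
    show "\<forall>x y. 0 \<le> topo sc a1 a2 A i $ x $ y"
    proof (intro allI)
      fix x y show "0 \<le> topo sc a1 a2 A i $ x $ y" using topo_entry[of sc a1 a2 A i x y] An[of x y] by auto
    qed
    show "\<forall>x. topo sc a1 a2 A i $ x $ x = 0"
    proof
      fix x show "topo sc a1 a2 A i $ x $ x = 0" using topo_entry[of sc a1 a2 A i x x] Ad by auto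
    qed
    show "\<forall>x. (\<Sum>k\<in>UNIV. topo sc a1 a2 A i $ x $ k) \<le> d"
    proof
      fix x
      have "(\<Sum>k\<in>UNIV. topo sc a1 a2 A i $ x $ k) \<le> (\<Sum>k\<in>UNIV. A $ x $ k)"
      proof (rule sum_mono)
        fix k show "topo sc a1 a2 A i $ x $ k \<le> A $ x $ k" using topo_entry[of sc a1 a2 A i x k] An[of x k] by auto
      qed
      then show "(\<Sum>k\<in>UNIV. topo sc a1 a2 A i $ x $ k) \<le> d" using degle[of x] by simp
    qed
  qed
  show ?thesis
  proof
    define B where "B = mat 1 - h *\<^sub>R lap A"
    have st: "\<forall>i. stoch (mpow (mat 1 - h *\<^sub>R lap (topo sc a1 a2 A i)) kbar)"
      using gstuff.B_stoch[OF gs] assms(10) hd by (auto intro!: stoch_mpow)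
    have Bn: "\<forall>i j. 0 \<le> B $ i $ j"
      using gstuff.B_stoch[OF gs[of 4], of h] assms(10) hd unfolding B_def topo4 stoch_def by auto
    have Bd: "\<forall>i. 0 < B $ i $ i"
    proof
      fix i
      have "h * (\<Sum>k\<in>UNIV. A $ i $ k) \<le> h * d" using degle assms(10) by (intro mult_left_mono) auto
      then show "0 < B $ i $ i" using hd Ad by (simp add: B_def lap_entry mat_def)
    qed
    have Be: "\<forall>a b. 0 < A$b$a \<longrightarrow> 0 < B$b$a"
    proof (intro allI impI)
      fix a b assume ab: "0 < A$b$a"
      then have "b \<noteq> a" using Ad by auto
      then show "0 < B$b$a" using ab assms(10) by (simp add: B_def lap_entry mat_def)
    qed
    obtain N0 where N0: "\<forall>N\<ge>N0. \<forall>i j. 0 < mpow B N $ i $ j"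
      using pos_reach[OF Bn Bd Be cn] by blast
    have "1 * Suc N0 \<le> kbar * Suc N0" using assms(12) by (rule mult_le_mono1)
    then have pos: "\<forall>i j. 0 < mpow (mpow (mat 1 - h *\<^sub>R lap (topo sc a1 a2 A 4)) kbar) (Suc N0) $ i $ j"
      using N0 unfolding topo4 mpow_mult B_def[symmetric] by auto
    show "\<forall>x0 :: real^'n. \<forall>\<epsilon>>0.
       (\<lambda>k. measure M {\<omega> \<in> space M.
          spread (traj (\<lambda>i. mpow (mat 1 - h *\<^sub>R lap (topo sc a1 a2 A i)) kbar) x0
                       (\<lambda>j. \<sigma> j \<omega>) k) \<ge> \<epsilon>}) \<longlonglongrightarrow> 0"
      by (rule consensus_abstract[OF ps ind q q0 st pos]) simp
  next
    define \<tau> where "\<tau> = real kbar * h"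
    have t0: "0 < \<tau>" using assms(10,12) by (simp add: \<tau>_def)
    define c where "c = d + 1"
    have st: "\<forall>i. stoch (mexp (- (\<tau> *\<^sub>R lap (topo sc a1 a2 A i))))"
      using gstuff.mexp_stoch[OF gs, of \<tau> d] t0 by simp
    define Z where "Z = \<tau> *\<^sub>R (c *\<^sub>R mat 1 - lap A)"
    have eq: "- (\<tau> *\<^sub>R lap A) = Z + (- (\<tau> * c)) *\<^sub>R mat 1"
      unfolding Z_def by (simp add: vec_eq_iff algebra_simps)
    have Zn: "\<forall>i j. 0 \<le> Z $ i $ j"
      using gstuff.Y_nonneg[OF gs[of 4], of c] t0 unfolding Z_def topo4 c_def by simp
    have Zd: "\<forall>i. 0 < Z $ i $ i"
    proof
      fix i
      have "\<tau> * (c - (\<Sum>k\<in>UNIV. A $ i $ k)) > 0" using degle[of i] t0 by (simp add: c_def)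
      then show "0 < Z $ i $ i" using Ad by (simp add: Z_def lap_entry mat_def)
    qed
    have Ze: "\<forall>a b. 0 < A$b$a \<longrightarrow> 0 < Z$b$a"
    proof (intro allI impI)
      fix a b assume ab: "0 < A$b$a"
      then have "b \<noteq> a" using Ad by auto
      then show "0 < Z$b$a" using ab t0 by (simp add: Z_def lap_entry mat_def)
    qed
    obtain N0 where N0: "\<forall>N\<ge>N0. \<forall>i j. 0 < mpow Z N $ i $ j"
      using pos_reach[OF Zn Zd Ze cn] by blast
    have mZ: "0 < mexp Z $ i $ j" for i j
    proof -
      have sm: "summable (\<lambda>m. mpow Z m $ i $ j / fact m)"
        using mpow_summable[of Z i j] by (rule summable_rabs_cancel)
      have "sum (\<lambda>m. mpow Z m $ i $ j / fact m) {N0} \<le> (\<Sum>m. mpow Z m $ i $ j / fact m)"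
        by (rule sum_le_suminf[OF sm]) (auto simp: nonneg_mpow[OF Zn])
      moreover have "0 < mpow Z N0 $ i $ j / fact N0" using N0 by simp
      ultimately show ?thesis by (simp add: mexp_entry)
    qed
    have pos: "\<forall>i j. 0 < mpow (mexp (- (\<tau> *\<^sub>R lap (topo sc a1 a2 A 4)))) 1 $ i $ j"
    proof (intro allI)
      fix i j
      have "mpow (mexp (- (\<tau> *\<^sub>R lap (topo sc a1 a2 A 4)))) 1 $ i $ j = exp (- (\<tau> * c)) * mexp Z $ i $ j"
        by (simp only: topo4 eq One_nat_def mpow.simps matrix_mul_rid mexp_shift)
      then show "0 < mpow (mexp (- (\<tau> *\<^sub>R lap (topo sc a1 a2 A 4)))) 1 $ i $ j"
        using mZ[of i j] by simp
    qed
    show "\<forall>x0 :: real^'n. \<forall>\<epsilon>>0.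
       (\<lambda>k. measure M {\<omega> \<in> space M.
          spread (traj (\<lambda>i. mexp (- ((real kbar * h) *\<^sub>R lap (topo sc a1 a2 A i)))) x0
                       (\<lambda>j. \<sigma> j \<omega>) k) \<ge> \<epsilon>}) \<longlonglongrightarrow> 0"
      using consensus_abstract[OF ps ind q q0 st pos] unfolding \<tau>_def by simp
  qed
qed



end
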